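(* Let $\mu\in V_n$. Then (i) $\operatorname{tr}(\mathrm M_\mu D)=0$ for every $D\in\mathrm{Der}(\mu)$; (ii) $\operatorname{tr}(\mathrm M_\mu[A,A^*])\ge 0$ for every $A\in\mathrm{Der}(\mu)$, with equality if and only if $A^*\in\mathrm{Der}(\mu)$.
   Context: $V_n$ is the space of bilinear maps $\mu:\mathbb C^n\times\mathbb C^n\to\mathbb C^n$; $\mathbb C^n$ has its standard Hermitian inner product and $A^*$ is the adjoint. $\mathrm{Der}(\mu)=\{D\in\mathfrak{gl}(n): D\mu(X,Y)=\mu(DX,Y)+\mu(X,DY)\ \forall X,Y\}$. For $X\in\mathbb C^n$, $L^\mu_X Y=\mu(X,Y)$, $R^\mu_X Y=\mu(Y,X)$, and for an orthonormal basis $\{X_i\}$ of $\mathbb C^n$, $\mathrm M_\mu=2\sum_i L^\mu_{X_i}(L^\mu_{X_i})^*-2\sum_i (L^\mu_{X_i})^*L^\mu_{X_i}-2\sum_i (R^\mu_{X_i})^*R^\mu_{X_i}$. *)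

theory Defs
  imports "HOL-Analysis.Analysis" "HOL-Library.Complex_Order"
begin

definition cbilinear :: "(complex^'n \<Rightarrow> complex^'n \<Rightarrow> complex^'n) \<Rightarrow> bool" where
  "cbilinear mu \<longleftrightarrow>
     (\<forall>X1 X2 Y. mu (X1 + X2) Y = mu X1 Y + mu X2 Y) \<and>
     (\<forall>c X Y. mu (c *s X) Y = c *s mu X Y) \<and>
     (\<forall>X Y1 Y2. mu X (Y1 + Y2) = mu X Y1 + mu X Y2) \<and>
     (\<forall>c X Y. mu X (c *s Y) = c *s mu X Y)"

definition Vn :: "(complex^'n \<Rightarrow> complex^'n \<Rightarrow> complex^'n) set" where
  "Vn = {mu. cbilinear mu}"

definition adj :: "complex^'n^'n \<Rightarrow> complex^'n^'n" where
  "adj A = (\<chi> i j. cnj (A $ j $ i))"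

definition Der :: "(complex^'n \<Rightarrow> complex^'n \<Rightarrow> complex^'n) \<Rightarrow> (complex^'n^'n) set" where
  "Der mu = {D. \<forall>X Y. D *v mu X Y = mu (D *v X) Y + mu X (D *v Y)}"

definition Lop :: "(complex^'n \<Rightarrow> complex^'n \<Rightarrow> complex^'n) \<Rightarrow> complex^'n \<Rightarrow> complex^'n^'n" where
  "Lop mu X = (\<chi> i j. mu X (axis j 1) $ i)"

definition Rop :: "(complex^'n \<Rightarrow> complex^'n \<Rightarrow> complex^'n) \<Rightarrow> complex^'n \<Rightarrow> complex^'n^'n" where
  "Rop mu X = (\<chi> i j. mu (axis j 1) X $ i)"

definition Mmu :: "(complex^'n \<Rightarrow> complex^'n \<Rightarrow> complex^'n) \<Rightarrow> complex^'n^'n" where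
  "Mmu mu =
     2 *\<^sub>R (\<Sum>k\<in>UNIV. Lop mu (axis k 1) ** adj (Lop mu (axis k 1)))
   - 2 *\<^sub>R (\<Sum>k\<in>UNIV. adj (Lop mu (axis k 1)) ** Lop mu (axis k 1))
   - 2 *\<^sub>R (\<Sum>k\<in>UNIV. adj (Rop mu (axis k 1)) ** Rop mu (axis k 1))"

end

theory Submission imports Defs "HOL-Library.Function_Algebras" begin

type_synonym 'n tens = "'n \<Rightarrow> 'n \<Rightarrow> 'n \<Rightarrow> complex"

definition O1 :: "complex^'n^'n \<Rightarrow> 'n tens \<Rightarrow> 'n tens" where
  "O1 D x = (\<lambda>i a b. \<Sum>l\<in>UNIV. D$i$l * x l a b)"
definition O2 :: "complex^'n^'n \<Rightarrow> 'n tens \<Rightarrow> 'n tens" where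
  "O2 D x = (\<lambda>i a b. \<Sum>p\<in>UNIV. D$p$a * x i p b)"
definition O3 :: "complex^'n^'n \<Rightarrow> 'n tens \<Rightarrow> 'n tens" where
  "O3 D x = (\<lambda>i a b. \<Sum>q\<in>UNIV. D$q$b * x i a q)"
definition rho :: "complex^'n^'n \<Rightarrow> 'n tens \<Rightarrow> 'n tens" where
  "rho D x = O1 D x - O2 D x - O3 D x"
definition ip :: "'n::finite tens \<Rightarrow> 'n tens \<Rightarrow> complex" where
  "ip x y = (\<Sum>i\<in>UNIV. \<Sum>a\<in>UNIV. \<Sum>b\<in>UNIV. x i a b * cnj (y i a b))"

lemma O1_diff: "O1 D (x - y) = O1 D x - O1 D y"
  by (simp add: O1_def fun_eq_iff sum_subtractf right_diff_distrib)
lemma O2_diff: "O2 D (x - y) = O2 D x - O2 D y"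
  by (simp add: O2_def fun_eq_iff sum_subtractf right_diff_distrib)
lemma O3_diff: "O3 D (x - y) = O3 D x - O3 D y"
  by (simp add: O3_def fun_eq_iff sum_subtractf right_diff_distrib)
lemma O1_mdiff: "O1 (A - B) x = O1 A x - O1 B x"
  by (simp add: O1_def fun_eq_iff sum_subtractf left_diff_distrib)
lemma O2_mdiff: "O2 (A - B) x = O2 A x - O2 B x"
  by (simp add: O2_def fun_eq_iff sum_subtractf left_diff_distrib)
lemma O3_mdiff: "O3 (A - B) x = O3 A x - O3 B x"
  by (simp add: O3_def fun_eq_iff sum_subtractf left_diff_distrib)

lemma O1_comp: "O1 A (O1 B x) = O1 (A ** B) x"
proof -
  have "(\<Sum>l\<in>UNIV. A$i$l * (\<Sum>m\<in>UNIV. B$l$m * x m a b)) = (\<Sum>m\<in>UNIV. (\<Sum>l\<in>UNIV. A$i$l * B$l$m) * x m a b)" for i a b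
    by (simp add: sum_distrib_left sum_distrib_right mult.assoc) (rule sum.swap)
  thus ?thesis by (simp add: O1_def fun_eq_iff matrix_matrix_mult_def)
qed

lemma O2_comp: "O2 A (O2 B x) = O2 (B ** A) x"
proof -
  have "(\<Sum>p\<in>UNIV. A$p$a * (\<Sum>q\<in>UNIV. B$q$p * x i q b)) = (\<Sum>q\<in>UNIV. (\<Sum>p\<in>UNIV. B$q$p * A$p$a) * x i q b)" for i a b
    by (simp add: sum_distrib_left sum_distrib_right ac_simps) (rule sum.swap)
  thus ?thesis by (simp add: O2_def fun_eq_iff matrix_matrix_mult_def)
qed
lemma O3_comp: "O3 A (O3 B x) = O3 (B ** A) x"
proof -
  have "(\<Sum>p\<in>UNIV. A$p$b * (\<Sum>q\<in>UNIV. B$q$p * x i a q)) = (\<Sum>q\<in>UNIV. (\<Sum>p\<in>UNIV. B$q$p * A$p$b) * x i a q)" for i a b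
    by (simp add: sum_distrib_left sum_distrib_right ac_simps) (rule sum.swap)
  thus ?thesis by (simp add: O3_def fun_eq_iff matrix_matrix_mult_def)
qed
lemma O12: "O2 B (O1 A x) = O1 A (O2 B x)"
  unfolding O1_def O2_def
  by (intro ext, simp add: sum_distrib_left ac_simps) (rule sum.swap)
lemma O13: "O3 B (O1 A x) = O1 A (O3 B x)"
  unfolding O1_def O3_def
  by (intro ext, simp add: sum_distrib_left ac_simps) (rule sum.swap)
lemma O23: "O3 B (O2 A x) = O2 A (O3 B x)"
  unfolding O3_def O2_def
  by (intro ext, simp add: sum_distrib_left ac_simps) (rule sum.swap)

lemma rho_comm: "rho A (rho B x) - rho B (rho A x) = rho (A ** B - B ** A) x"
  unfolding rho_def
  by (simp add: O1_diff O2_diff O3_diff O1_mdiff O2_mdiff O3_mdiff O1_comp O2_comp O3_comp O12 O13 O23)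

lemma sw_in: "(\<Sum>a\<in>B. \<Sum>b\<in>C. \<Sum>l\<in>E. g a b l) = (\<Sum>l\<in>E. \<Sum>a\<in>B. \<Sum>b\<in>C. g a b l)"
proof -
  have "(\<Sum>a\<in>B. \<Sum>b\<in>C. \<Sum>l\<in>E. g a b l) = (\<Sum>a\<in>B. \<Sum>l\<in>E. \<Sum>b\<in>C. g a b l)"
    by (intro sum.cong refl) (rule sum.swap)
  also have "\<dots> = (\<Sum>l\<in>E. \<Sum>a\<in>B. \<Sum>b\<in>C. g a b l)" by (rule sum.swap)
  finally show ?thesis .
qed
lemma sw1: "(\<Sum>i\<in>A. \<Sum>a\<in>B. \<Sum>b\<in>C. \<Sum>l\<in>E. f i a b l) = (\<Sum>l\<in>E. \<Sum>a\<in>B. \<Sum>b\<in>C. \<Sum>i\<in>A. f i a b l)"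
proof -
  have "(\<Sum>i\<in>A. \<Sum>a\<in>B. \<Sum>b\<in>C. \<Sum>l\<in>E. f i a b l) = (\<Sum>i\<in>A. \<Sum>l\<in>E. \<Sum>a\<in>B. \<Sum>b\<in>C. f i a b l)"
    by (intro sum.cong refl) (rule sw_in)
  also have "\<dots> = (\<Sum>l\<in>E. \<Sum>i\<in>A. \<Sum>a\<in>B. \<Sum>b\<in>C. f i a b l)" by (rule sum.swap)
  also have "\<dots> = (\<Sum>l\<in>E. \<Sum>a\<in>B. \<Sum>b\<in>C. \<Sum>i\<in>A. f i a b l)"
    by (intro sum.cong refl) (rule sw_in[symmetric])
  finally show ?thesis .
qed
lemma sw2: "(\<Sum>i\<in>A. \<Sum>a\<in>B. \<Sum>b\<in>C. \<Sum>p\<in>E. f i a b p) = (\<Sum>i\<in>A. \<Sum>p\<in>E. \<Sum>b\<in>C. \<Sum>a\<in>B. f i a b p)"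
proof -
  have "(\<Sum>i\<in>A. \<Sum>a\<in>B. \<Sum>b\<in>C. \<Sum>p\<in>E. f i a b p) = (\<Sum>i\<in>A. \<Sum>a\<in>B. \<Sum>p\<in>E. \<Sum>b\<in>C. f i a b p)"
    by (intro sum.cong refl) (rule sum.swap)
  also have "\<dots> = (\<Sum>i\<in>A. \<Sum>p\<in>E. \<Sum>a\<in>B. \<Sum>b\<in>C. f i a b p)"
    by (intro sum.cong refl) (rule sum.swap)
  also have "\<dots> = (\<Sum>i\<in>A. \<Sum>p\<in>E. \<Sum>b\<in>C. \<Sum>a\<in>B. f i a b p)"
    by (intro sum.cong refl) (rule sum.swap)
  finally show ?thesis .
qed
lemma sw3: "(\<Sum>i\<in>A. \<Sum>a\<in>B. \<Sum>b\<in>C. \<Sum>q\<in>E. f i a b q) = (\<Sum>i\<in>A. \<Sum>a\<in>B. \<Sum>q\<in>E. \<Sum>b\<in>C. f i a b q)"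
  by (intro sum.cong refl) (rule sum.swap)

lemma ip_O1: "ip (O1 D x) y = ip x (O1 (adj D) y)"
proof -
  let ?f = "\<lambda>i a b l. D$i$l * x l a b * cnj (y i a b)"
  have "ip (O1 D x) y = (\<Sum>i\<in>UNIV. \<Sum>a\<in>UNIV. \<Sum>b\<in>UNIV. \<Sum>l\<in>UNIV. ?f i a b l)"
    by (simp add: ip_def O1_def sum_distrib_right)
  also have "\<dots> = (\<Sum>l\<in>UNIV. \<Sum>a\<in>UNIV. \<Sum>b\<in>UNIV. \<Sum>i\<in>UNIV. ?f i a b l)" by (rule sw1)
  also have "\<dots> = ip x (O1 (adj D) y)"
    by (simp add: ip_def O1_def adj_def sum_distrib_left ac_simps)
  finally show ?thesis .
qed
lemma ip_O2: "ip (O2 D x) y = ip x (O2 (adj D) y)"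
proof -
  let ?f = "\<lambda>i a b p. D$p$a * x i p b * cnj (y i a b)"
  have "ip (O2 D x) y = (\<Sum>i\<in>UNIV. \<Sum>a\<in>UNIV. \<Sum>b\<in>UNIV. \<Sum>p\<in>UNIV. ?f i a b p)"
    by (simp add: ip_def O2_def sum_distrib_right)
  also have "\<dots> = (\<Sum>i\<in>UNIV. \<Sum>p\<in>UNIV. \<Sum>b\<in>UNIV. \<Sum>a\<in>UNIV. ?f i a b p)" by (rule sw2)
  also have "\<dots> = ip x (O2 (adj D) y)"
    by (simp add: ip_def O2_def adj_def sum_distrib_left ac_simps)
  finally show ?thesis .
qed
lemma ip_O3: "ip (O3 D x) y = ip x (O3 (adj D) y)"
proof -
  let ?f = "\<lambda>i a b q. D$q$b * x i a q * cnj (y i a b)"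
  have "ip (O3 D x) y = (\<Sum>i\<in>UNIV. \<Sum>a\<in>UNIV. \<Sum>b\<in>UNIV. \<Sum>q\<in>UNIV. ?f i a b q)"
    by (simp add: ip_def O3_def sum_distrib_right)
  also have "\<dots> = (\<Sum>i\<in>UNIV. \<Sum>a\<in>UNIV. \<Sum>q\<in>UNIV. \<Sum>b\<in>UNIV. ?f i a b q)" by (rule sw3)
  also have "\<dots> = ip x (O3 (adj D) y)"
    by (simp add: ip_def O3_def adj_def sum_distrib_left ac_simps)
  finally show ?thesis .
qed

lemma rho_zero: "rho D 0 = 0"
  by (simp add: rho_def O1_def O2_def O3_def fun_eq_iff)

lemma ip_diff: "ip (x - y) z = ip x z - ip y z"
  by (simp add: ip_def sum_subtractf left_diff_distrib)

lemma ip_sym: "ip (rho D x) y = ip x (rho (adj D) y)"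
proof -
  have c: "cnj (u - v) = cnj u - cnj v" for u v :: complex by simp
  have "ip x (rho (adj D) y) = ip x (O1 (adj D) y) - ip x (O2 (adj D) y) - ip x (O3 (adj D) y)"
    by (simp add: ip_def rho_def sum_subtractf right_diff_distrib)
  thus ?thesis by (simp add: rho_def ip_diff ip_O1 ip_O2 ip_O3)
qed

definition vv :: "(complex^'n \<Rightarrow> complex^'n \<Rightarrow> complex^'n) \<Rightarrow> 'n tens" where
  "vv mu = (\<lambda>i a b. mu (axis a 1) (axis b 1) $ i)"

lemma bil_sum1:
  assumes "cbilinear mu" "finite S"
  shows "mu (sum f S) Y = (\<Sum>a\<in>S. mu (f a) Y)"
  using assms(2)
proof (induction S rule: finite_induct)
  case empty
  have "mu (0 *s 0) Y = 0 *s mu 0 Y" using assms(1) unfolding cbilinear_def by blast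
  thus ?case by simp
next
  case (insert x F)
  then show ?case using assms(1) unfolding cbilinear_def by simp
qed

lemma bil_sum2:
  assumes "cbilinear mu" "finite S"
  shows "mu Y (sum f S) = (\<Sum>a\<in>S. mu Y (f a))"
  using assms(2)
proof (induction S rule: finite_induct)
  case empty
  have "mu Y (0 *s 0) = 0 *s mu Y 0" using assms(1) unfolding cbilinear_def by blast
  thus ?case by simp
next
  case (insert x F)
  then show ?case using assms(1) unfolding cbilinear_def by simp
qed

lemma bil_comp:
  assumes "cbilinear mu"
  shows "mu X Y $ i = (\<Sum>a\<in>UNIV. \<Sum>b\<in>UNIV. X$a * Y$b * vv mu i a b)"
proof -
  have "mu X Y = mu (\<Sum>a\<in>UNIV. X$a *s axis a 1) (\<Sum>b\<in>UNIV. Y$b *s axis b 1)"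
    by (simp add: basis_expansion)
  also have "\<dots> = (\<Sum>a\<in>UNIV. \<Sum>b\<in>UNIV. (X$a * Y$b) *s mu (axis a 1) (axis b 1))"
    using assms by (simp add: bil_sum1 bil_sum2 cbilinear_def vec_eq_iff sum_distrib_left mult.assoc mult.left_commute)
  finally show ?thesis by (simp add: vv_def mult.assoc)
qed


lemma t1:
  fixes D :: "complex^'n^'n" and X Y :: "complex^'n" and v :: "'n tens"
  shows "(\<Sum>l\<in>UNIV. D$i$l * (\<Sum>a\<in>UNIV. \<Sum>b\<in>UNIV. X$a * Y$b * v l a b)) =
   (\<Sum>a\<in>UNIV. \<Sum>b\<in>UNIV. X$a * Y$b * (\<Sum>l\<in>UNIV. D$i$l * v l a b))"
proof -
  have "(\<Sum>l\<in>UNIV. D$i$l * (\<Sum>a\<in>UNIV. \<Sum>b\<in>UNIV. X$a * Y$b * v l a b)) =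
     (\<Sum>l\<in>UNIV. \<Sum>a\<in>UNIV. \<Sum>b\<in>UNIV. D$i$l * (X$a * Y$b * v l a b))"
    by (simp add: sum_distrib_left)
  also have "\<dots> = (\<Sum>a\<in>UNIV. \<Sum>b\<in>UNIV. \<Sum>l\<in>UNIV. D$i$l * (X$a * Y$b * v l a b))"
    by (rule sw_in[symmetric])
  also have "\<dots> = (\<Sum>a\<in>UNIV. \<Sum>b\<in>UNIV. X$a * Y$b * (\<Sum>l\<in>UNIV. D$i$l * v l a b))"
    by (simp add: sum_distrib_left ac_simps)
  finally show ?thesis .
qed

lemma t2:
  fixes D :: "complex^'n^'n" and X Y :: "complex^'n" and v :: "'n tens"
  shows "(\<Sum>p\<in>UNIV. \<Sum>b\<in>UNIV. (\<Sum>a\<in>UNIV. D$p$a * X$a) * Y$b * v i p b) =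
   (\<Sum>a\<in>UNIV. \<Sum>b\<in>UNIV. X$a * Y$b * (\<Sum>p\<in>UNIV. D$p$a * v i p b))"
proof -
  have "(\<Sum>p\<in>UNIV. \<Sum>b\<in>UNIV. (\<Sum>a\<in>UNIV. D$p$a * X$a) * Y$b * v i p b) =
     (\<Sum>p\<in>UNIV. \<Sum>b\<in>UNIV. \<Sum>a\<in>UNIV. X$a * Y$b * (D$p$a * v i p b))"
    by (simp add: sum_distrib_right sum_distrib_left ac_simps)
  also have "\<dots> = (\<Sum>a\<in>UNIV. \<Sum>p\<in>UNIV. \<Sum>b\<in>UNIV. X$a * Y$b * (D$p$a * v i p b))"
    by (rule sw_in)
  also have "\<dots> = (\<Sum>a\<in>UNIV. \<Sum>b\<in>UNIV. \<Sum>p\<in>UNIV. X$a * Y$b * (D$p$a * v i p b))"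
    by (rule sum.cong[OF refl], rule sum.swap)
  also have "\<dots> = (\<Sum>a\<in>UNIV. \<Sum>b\<in>UNIV. X$a * Y$b * (\<Sum>p\<in>UNIV. D$p$a * v i p b))"
    by (simp add: sum_distrib_left)
  finally show ?thesis .
qed

lemma t3:
  fixes D :: "complex^'n^'n" and X Y :: "complex^'n" and v :: "'n tens"
  shows "(\<Sum>a\<in>UNIV. \<Sum>q\<in>UNIV. X$a * (\<Sum>b\<in>UNIV. D$q$b * Y$b) * v i a q) =
   (\<Sum>a\<in>UNIV. \<Sum>b\<in>UNIV. X$a * Y$b * (\<Sum>q\<in>UNIV. D$q$b * v i a q))"
proof -
  have "(\<Sum>a\<in>UNIV. \<Sum>q\<in>UNIV. X$a * (\<Sum>b\<in>UNIV. D$q$b * Y$b) * v i a q) =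
     (\<Sum>a\<in>UNIV. \<Sum>q\<in>UNIV. \<Sum>b\<in>UNIV. X$a * Y$b * (D$q$b * v i a q))"
    by (simp add: sum_distrib_right sum_distrib_left ac_simps)
  also have "\<dots> = (\<Sum>a\<in>UNIV. \<Sum>b\<in>UNIV. \<Sum>q\<in>UNIV. X$a * Y$b * (D$q$b * v i a q))"
    by (rule sum.cong[OF refl], rule sum.swap)
  also have "\<dots> = (\<Sum>a\<in>UNIV. \<Sum>b\<in>UNIV. X$a * Y$b * (\<Sum>q\<in>UNIV. D$q$b * v i a q))"
    by (simp add: sum_distrib_left)
  finally show ?thesis .
qed

lemma keyF:
  fixes mu :: "complex^'n \<Rightarrow> complex^'n \<Rightarrow> complex^'n"
  assumes "cbilinear mu"
  shows "(D *v mu X Y - mu (D *v X) Y - mu X (D *v Y)) $ i =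
    (\<Sum>a\<in>UNIV. \<Sum>b\<in>UNIV. X$a * Y$b * rho D (vv mu) i a b)"
proof -
  have 1: "(D *v mu X Y) $ i = (\<Sum>a\<in>UNIV. \<Sum>b\<in>UNIV. X$a * Y$b * O1 D (vv mu) i a b)"
    by (simp add: matrix_vector_mult_def bil_comp[OF assms] O1_def t1)
  have 2: "mu (D *v X) Y $ i = (\<Sum>a\<in>UNIV. \<Sum>b\<in>UNIV. X$a * Y$b * O2 D (vv mu) i a b)"
    by (simp add: matrix_vector_mult_def bil_comp[OF assms] O2_def t2)
  have 3: "mu X (D *v Y) $ i = (\<Sum>a\<in>UNIV. \<Sum>b\<in>UNIV. X$a * Y$b * O3 D (vv mu) i a b)"
    by (simp add: matrix_vector_mult_def bil_comp[OF assms] O3_def t3)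
  show ?thesis
    by (simp add: 1 2 3 rho_def sum_subtractf right_diff_distrib)
qed

lemma der_iff:
  fixes mu :: "complex^'n \<Rightarrow> complex^'n \<Rightarrow> complex^'n"
  assumes "cbilinear mu"
  shows "D \<in> Der mu \<longleftrightarrow> rho D (vv mu) = 0"
proof
  assume "D \<in> Der mu"
  hence z: "(D *v mu X Y - mu (D *v X) Y - mu X (D *v Y)) $ i = 0" for X Y i
    by (simp add: Der_def)
  have "rho D (vv mu) i a b = 0" for i a b
  proof -
    have "(\<Sum>a'\<in>UNIV. \<Sum>b'\<in>UNIV. (axis a 1 :: complex^'n)$a' * (axis b 1 :: complex^'n)$b' * rho D (vv mu) i a' b') = 0"
      using z[of "axis a 1" "axis b 1" i] by (simp only: keyF[OF assms])
    moreover have "(\<Sum>b'\<in>UNIV. (axis a 1 :: complex^'n)$a' * (axis b 1 :: complex^'n)$b' * rho D (vv mu) i a' b') =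
        (if a' = a then rho D (vv mu) i a' b else 0)" for a'
      by (cases "a' = a") (simp_all add: axis_def if_distrib[of "\<lambda>x. x * _"] cong: if_cong)
    ultimately show ?thesis by simp
  qed
  thus "rho D (vv mu) = 0" by (simp add: fun_eq_iff)
next
  assume "rho D (vv mu) = 0"
  hence "(D *v mu X Y - mu (D *v X) Y - mu X (D *v Y)) $ i = 0" for X Y i
    unfolding keyF[OF assms] by simp
  thus "D \<in> Der mu" by (simp add: Der_def vec_eq_iff algebra_simps)
qed


lemma trP1:
  fixes mu :: "complex^'n \<Rightarrow> complex^'n \<Rightarrow> complex^'n" and D :: "complex^'n^'n"
  shows "trace ((\<Sum>k\<in>UNIV. Lop mu (axis k 1) ** adj (Lop mu (axis k 1))) ** D) = ip (O1 D (vv mu)) (vv mu)"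
proof -
  define v where "v = vv mu"
  let ?g = "\<lambda>i l k j. D$l$i * v i k j * cnj (v l k j)"
  have "trace ((\<Sum>k\<in>UNIV. Lop mu (axis k 1) ** adj (Lop mu (axis k 1))) ** D)
     = (\<Sum>i\<in>UNIV. \<Sum>l\<in>UNIV. \<Sum>k\<in>UNIV. \<Sum>j\<in>UNIV. ?g i l k j)"
    by (simp add: trace_def matrix_matrix_mult_def Lop_def adj_def v_def vv_def sum_distrib_right sum_distrib_left ac_simps)
  also have "\<dots> = (\<Sum>l\<in>UNIV. \<Sum>i\<in>UNIV. \<Sum>k\<in>UNIV. \<Sum>j\<in>UNIV. ?g i l k j)"
    by (rule sum.swap)
  also have "\<dots> = (\<Sum>l\<in>UNIV. \<Sum>k\<in>UNIV. \<Sum>j\<in>UNIV. \<Sum>i\<in>UNIV. ?g i l k j)"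
    by (rule sum.cong[OF refl], rule sw_in[symmetric])
  also have "\<dots> = ip (O1 D v) v"
    by (simp add: ip_def O1_def sum_distrib_right sum_distrib_left ac_simps)
  finally show ?thesis by (simp add: v_def)
qed

lemma trP2:
  fixes mu :: "complex^'n \<Rightarrow> complex^'n \<Rightarrow> complex^'n" and D :: "complex^'n^'n"
  shows "trace ((\<Sum>k\<in>UNIV. adj (Lop mu (axis k 1)) ** Lop mu (axis k 1)) ** D) = ip (O3 D (vv mu)) (vv mu)"
proof -
  define v where "v = vv mu"
  let ?g = "\<lambda>i l k j. D$l$i * v j k l * cnj (v j k i)"
  have "trace ((\<Sum>k\<in>UNIV. adj (Lop mu (axis k 1)) ** Lop mu (axis k 1)) ** D)
     = (\<Sum>i\<in>UNIV. \<Sum>l\<in>UNIV. \<Sum>k\<in>UNIV. \<Sum>j\<in>UNIV. ?g i l k j)"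
    by (simp add: trace_def matrix_matrix_mult_def Lop_def adj_def v_def vv_def sum_distrib_right sum_distrib_left ac_simps)
  also have "\<dots> = (\<Sum>i\<in>UNIV. \<Sum>j\<in>UNIV. \<Sum>l\<in>UNIV. \<Sum>k\<in>UNIV. ?g i l k j)"
    by (rule sum.cong[OF refl], rule sw_in)
  also have "\<dots> = (\<Sum>j\<in>UNIV. \<Sum>i\<in>UNIV. \<Sum>l\<in>UNIV. \<Sum>k\<in>UNIV. ?g i l k j)"
    by (rule sum.swap)
  also have "\<dots> = (\<Sum>j\<in>UNIV. \<Sum>k\<in>UNIV. \<Sum>i\<in>UNIV. \<Sum>l\<in>UNIV. ?g i l k j)"
    by (rule sum.cong[OF refl], rule sw_in)
  also have "\<dots> = ip (O3 D v) v"
    by (simp add: ip_def O3_def sum_distrib_right sum_distrib_left ac_simps)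
  finally show ?thesis by (simp add: v_def)
qed

lemma trP3:
  fixes mu :: "complex^'n \<Rightarrow> complex^'n \<Rightarrow> complex^'n" and D :: "complex^'n^'n"
  shows "trace ((\<Sum>k\<in>UNIV. adj (Rop mu (axis k 1)) ** Rop mu (axis k 1)) ** D) = ip (O2 D (vv mu)) (vv mu)"
proof -
  define v where "v = vv mu"
  let ?g = "\<lambda>i l k j. D$l$i * v j l k * cnj (v j i k)"
  have "trace ((\<Sum>k\<in>UNIV. adj (Rop mu (axis k 1)) ** Rop mu (axis k 1)) ** D)
     = (\<Sum>i\<in>UNIV. \<Sum>l\<in>UNIV. \<Sum>k\<in>UNIV. \<Sum>j\<in>UNIV. ?g i l k j)"
    by (simp add: trace_def matrix_matrix_mult_def Rop_def adj_def v_def vv_def sum_distrib_right sum_distrib_left ac_simps)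
  also have "\<dots> = (\<Sum>i\<in>UNIV. \<Sum>j\<in>UNIV. \<Sum>l\<in>UNIV. \<Sum>k\<in>UNIV. ?g i l k j)"
    by (rule sum.cong[OF refl], rule sw_in)
  also have "\<dots> = (\<Sum>j\<in>UNIV. \<Sum>i\<in>UNIV. \<Sum>l\<in>UNIV. \<Sum>k\<in>UNIV. ?g i l k j)"
    by (rule sum.swap)
  also have "\<dots> = (\<Sum>j\<in>UNIV. \<Sum>i\<in>UNIV. \<Sum>k\<in>UNIV. \<Sum>l\<in>UNIV. ?g i l k j)"
    by (rule sum.cong[OF refl], rule sum.cong[OF refl], rule sum.swap)
  also have "\<dots> = ip (O2 D v) v"
    by (simp add: ip_def O2_def sum_distrib_right sum_distrib_left ac_simps)
  finally show ?thesis by (simp add: v_def)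
qed

lemma tr_lin:
  fixes A B C D :: "complex^'n^'n"
  shows "trace ((2 *\<^sub>R A - 2 *\<^sub>R B - 2 *\<^sub>R C) ** D) = 2 * (trace (A ** D) - trace (B ** D) - trace (C ** D))"
  by (simp add: trace_def matrix_matrix_mult_def sum_subtractf sum_distrib_left sum.distrib algebra_simps scaleR_conv_of_real)

lemma tr_M:
  fixes mu :: "complex^'n \<Rightarrow> complex^'n \<Rightarrow> complex^'n" and D :: "complex^'n^'n"
  shows "trace (Mmu mu ** D) = 2 * ip (rho D (vv mu)) (vv mu)"
  unfolding Mmu_def tr_lin trP1 trP2 trP3 by (simp add: rho_def ip_diff)


lemma ip_zero: "ip 0 y = 0"
  by (simp add: ip_def)

lemma ip_self: "ip w w = complex_of_real (\<Sum>i\<in>UNIV. \<Sum>a\<in>UNIV. \<Sum>b\<in>UNIV. (cmod (w i a b))^2)"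
proof -
  have e: "w i a b * cnj (w i a b) = complex_of_real ((cmod (w i a b))^2)" for i a b
    by (rule complex_norm_square[symmetric])
  show ?thesis unfolding ip_def e of_real_sum ..
qed

lemma ip_self_zero:
  fixes w :: "'n::finite tens"
  shows "(\<Sum>i\<in>UNIV. \<Sum>a\<in>UNIV. \<Sum>b\<in>UNIV. (cmod (w i a b))^2) = 0 \<longleftrightarrow> w = 0"
  by (simp add: sum_nonneg_eq_0_iff sum_nonneg fun_eq_iff)

theorem corollary3p2:
  fixes mu :: "complex^'n \<Rightarrow> complex^'n \<Rightarrow> complex^'n"
  assumes "mu \<in> Vn"
  shows "(\<forall>D \<in> Der mu. trace (Mmu mu ** D) = 0) \<and>
         (\<forall>A \<in> Der mu. trace (Mmu mu ** (A ** adj A - adj A ** A)) \<ge> 0 \<and>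
            (trace (Mmu mu ** (A ** adj A - adj A ** A)) = 0 \<longleftrightarrow> adj A \<in> Der mu))"
proof -
  have bil: "cbilinear mu" using assms by (simp add: Vn_def)
  define v where "v = vv mu"
  have part1: "\<forall>D \<in> Der mu. trace (Mmu mu ** D) = 0"
  proof
    fix D assume "D \<in> Der mu"
    hence "rho D v = 0" using der_iff[OF bil] v_def by simp
    thus "trace (Mmu mu ** D) = 0" by (simp add: tr_M v_def[symmetric] ip_zero)
  qed
  have part2: "trace (Mmu mu ** (A ** adj A - adj A ** A)) \<ge> 0 \<and>
            (trace (Mmu mu ** (A ** adj A - adj A ** A)) = 0 \<longleftrightarrow> adj A \<in> Der mu)"
    if A: "A \<in> Der mu" for A
  proof -
    have z: "rho A v = 0" using der_iff[OF bil] v_def A by simp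
    define w where "w = rho (adj A) v"
    have aa: "adj (adj A) = A" by (simp add: adj_def vec_eq_iff)
    have "rho (A ** adj A - adj A ** A) v = rho A w - rho (adj A) (rho A v)"
      by (simp add: rho_comm[symmetric] w_def)
    hence "rho (A ** adj A - adj A ** A) v = rho A w" by (simp add: z rho_zero)
    hence "trace (Mmu mu ** (A ** adj A - adj A ** A)) = 2 * ip (rho A w) v"
      by (simp add: tr_M v_def[symmetric])
    also have "ip (rho A w) v = ip w w" by (simp add: ip_sym w_def)
    also have "ip w w = complex_of_real (\<Sum>i\<in>UNIV. \<Sum>a\<in>UNIV. \<Sum>b\<in>UNIV. (cmod (w i a b))^2)"
      by (rule ip_self)
    finally have tr: "trace (Mmu mu ** (A ** adj A - adj A ** A)) =
        2 * complex_of_real (\<Sum>i\<in>UNIV. \<Sum>a\<in>UNIV. \<Sum>b\<in>UNIV. (cmod (w i a b))^2)" .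
    define R where "R = (\<Sum>i\<in>UNIV. \<Sum>a\<in>UNIV. \<Sum>b\<in>UNIV. (cmod (w i a b))^2)"
    have nn: "R \<ge> 0" unfolding R_def by (simp add: sum_nonneg)
    have r0: "R = 0 \<longleftrightarrow> w = 0" unfolding R_def by (rule ip_self_zero)
    have "adj A \<in> Der mu \<longleftrightarrow> w = 0" using der_iff[OF bil] by (simp add: w_def v_def)
    thus ?thesis using tr nn r0 unfolding R_def[symmetric] by (simp add: less_eq_complex_def)
  qed
  show ?thesis using part1 part2 by blast
qed

end
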